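(* Let $\mathcal{A}$ be a complex Banach algebra with identity, $\lambda$ a nonzero complex number, and $M = \begin{pmatrix} A & B \\ C & D \end{pmatrix} \in M_2(\mathcal{A})$ with $A, D \in \mathcal{A}^d$. Suppose $BC, CB \in \mathcal{A}^d$ (so that the expressions below make sense), and $$BD = \lambda (BC)^\pi A B D^\pi \quad\text{and}\quad CA = \lambda (CB)^\pi D C A^\pi.$$ Put $P = \begin{pmatrix} A & 0 \\ 0 & D \end{pmatrix}$ and $Q = \begin{pmatrix} 0 & B \\ C & 0 \end{pmatrix}$, so $M=P+Q$, $P^d=\begin{pmatrix} A^d & 0 \\ 0 & D^d \end{pmatrix}$, $Q^d=\begin{pmatrix} 0 & B(CB)^d \\ C(BC)^d & 0 \end{pmatrix}$. Then $M \in M_2(\mathcal{A})^d$ and $$\begin{aligned} M^d ={}& \begin{pmatrix} A^d(BC)^\pi & A^\pi B(CB)^d \\ D^\pi C(BC)^d & D^d(CB)^\pi \end{pmatrix} + \sum_{n=0}^{\infty} (P^d)^{n+2} Q M^n Q^\pi + P^\pi \sum_{n=0}^{\infty} M^n P (Q^d)^{n+2} \\ &- \sum_{n=0}^{\infty} \sum_{k=0}^{\infty} (P^d)^{k+1} Q M^{n+k} P (Q^d)^{n+2} - \sum_{n=0}^{\infty} (P^d)^{n+2} Q M^n P Q^d.\end{aligned}$$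
   Context: $M_2(\mathcal{A})$ is the Banach algebra of $2\times 2$ matrices over $\mathcal{A}$. $\mathcal{A}^{qnil}$ is the set of quasinilpotent elements ($\lim\|x^n\|^{1/n}=0$). An element $x$ of a Banach algebra has a generalized Drazin (g-Drazin) inverse $x^d$ if $x^d$ commutes with $x$, $x^d = x^dxx^d$ and $x - x^2x^d$ is quasinilpotent; $\mathcal{A}^d$ (resp. $M_2(\mathcal{A})^d$) denotes the set of g-Drazin invertible elements. The spectral idempotent is $x^\pi = 1 - xx^d$ (with $1$ the relevant identity). *)

theory Defs
  imports "HOL-Analysis.Analysis"
begin

text \<open>Isabelle's algebra classes are real; a complex Banach algebra with identity is a
 real unital Banach algebra with a compatible complex scalar multiplication.\<close>

class complex_banach_algebra_1 = real_normed_algebra_1 + banach +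
  fixes scaleC :: "complex \<Rightarrow> 'a \<Rightarrow> 'a"
  assumes scaleC_add_right: "scaleC c (x + y) = scaleC c x + scaleC c y"
    and scaleC_add_left: "scaleC (c + d) x = scaleC c x + scaleC d x"
    and scaleC_scaleC: "scaleC c (scaleC d x) = scaleC (c * d) x"
    and scaleC_one: "scaleC 1 x = x"
    and scaleR_scaleC: "scaleR r x = scaleC (complex_of_real r) x"
    and norm_scaleC: "norm (scaleC c x) = cmod c * norm x"
    and mult_scaleC_left: "scaleC c x * y = scaleC c (x * y)"
    and mult_scaleC_right: "x * scaleC c y = scaleC c (x * y)"

definition quasinilpotent :: "'a::real_normed_algebra_1 \<Rightarrow> bool" where
  "quasinilpotent x \<longleftrightarrow> (\<lambda>n. root n (norm (x ^ n))) \<longlonglongrightarrow> 0"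

definition is_gdrazin_inv :: "'a::real_normed_algebra_1 \<Rightarrow> 'a \<Rightarrow> bool" where
  "is_gdrazin_inv x y \<longleftrightarrow> y * x = x * y \<and> y = y * x * y \<and> quasinilpotent (x - x^2 * y)"

definition gdrazin_invertible :: "'a::real_normed_algebra_1 \<Rightarrow> bool" where
  "gdrazin_invertible x \<longleftrightarrow> (\<exists>y. is_gdrazin_inv x y)"

definition gd :: "'a::real_normed_algebra_1 \<Rightarrow> 'a" where
  "gd x = (THE y. is_gdrazin_inv x y)"

definition spi :: "'a::real_normed_algebra_1 \<Rightarrow> 'a" where
  "spi x = 1 - x * gd x"

text \<open>M_2(A) is modelled as \<open>'a^2^2\<close> with matrix product \<open>**\<close>, identity \<open>mat 1\<close>
 and the (complete, equivalent) product norm from HOL-Analysis.\<close>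

definition mk2 :: "'a::zero \<Rightarrow> 'a \<Rightarrow> 'a \<Rightarrow> 'a \<Rightarrow> 'a^2^2" where
  "mk2 a b c d = (\<chi> i j. if i = 1 then (if j = 1 then a else b) else (if j = 1 then c else d))"

primrec mpow :: "'a::semiring_1^2^2 \<Rightarrow> nat \<Rightarrow> 'a^2^2" where
  "mpow X 0 = mat 1"
| "mpow X (Suc n) = X ** mpow X n"

definition quasinilpotent2 :: "'a::real_normed_algebra_1^2^2 \<Rightarrow> bool" where
  "quasinilpotent2 X \<longleftrightarrow> (\<lambda>n. root n (norm (mpow X n))) \<longlonglongrightarrow> 0"

definition is_gdrazin_inv2 :: "'a::real_normed_algebra_1^2^2 \<Rightarrow> 'a^2^2 \<Rightarrow> bool" where
  "is_gdrazin_inv2 X Y \<longleftrightarrow> Y ** X = X ** Y \<and> Y = Y ** X ** Y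
     \<and> quasinilpotent2 (X - mpow X 2 ** Y)"

definition gdrazin_invertible2 :: "'a::real_normed_algebra_1^2^2 \<Rightarrow> bool" where
  "gdrazin_invertible2 X \<longleftrightarrow> (\<exists>Y. is_gdrazin_inv2 X Y)"

definition gd2 :: "'a::real_normed_algebra_1^2^2 \<Rightarrow> 'a^2^2" where
  "gd2 X = (THE Y. is_gdrazin_inv2 X Y)"

end

theory Submission
  imports Defs
begin
lemma root_bound_iff:
  fixes f :: "nat \<Rightarrow> real"
  assumes nn: "\<And>n. f n \<ge> 0"
  shows "(\<lambda>n. root n (f n)) \<longlonglongrightarrow> 0 \<longleftrightarrow> (\<forall>\<epsilon>>0. \<exists>C. \<forall>n. f n \<le> C * \<epsilon> ^ n)"
proof
  assume L: "(\<lambda>n. root n (f n)) \<longlonglongrightarrow> 0"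
  show "\<forall>\<epsilon>>0. \<exists>C. \<forall>n. f n \<le> C * \<epsilon> ^ n"
  proof (intro allI impI)
    fix \<epsilon> :: real assume e: "\<epsilon> > 0"
    from L e obtain N where N: "\<And>n. n \<ge> N \<Longrightarrow> \<bar>root n (f n) - 0\<bar> < \<epsilon>"
      unfolding LIMSEQ_def dist_real_def by blast
    define C where "C = 1 + (\<Sum>n<Suc N. f n / \<epsilon> ^ n)"
    have "f n \<le> C * \<epsilon> ^ n" for n
    proof (cases "n \<le> N")
      case True
      have "f n / \<epsilon> ^ n \<le> (\<Sum>n<Suc N. f n / \<epsilon> ^ n)"
        by (rule member_le_sum) (use True nn e in auto)
      hence "f n / \<epsilon> ^ n \<le> C" unfolding C_def by simp
      thus ?thesis using e by (simp add: divide_le_eq)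
    next
      case False
      hence n0: "n > 0" "n \<ge> N" by auto
      have r: "root n (f n) < \<epsilon>" using N[OF n0(2)] by simp
      have "0 \<le> root n (f n)" using nn[of n] by (rule real_root_ge_zero)
      hence "root n (f n) ^ n \<le> \<epsilon> ^ n" using r by (intro power_mono) auto
      hence "f n \<le> \<epsilon> ^ n" using real_root_pow_pos2[OF n0(1) nn] by simp
      moreover have "C \<ge> 1" unfolding C_def using nn e by (simp add: sum_nonneg del: sum.lessThan_Suc)
      moreover have "1 * \<epsilon> ^ n \<le> C * \<epsilon> ^ n" using calculation(2) e by (intro mult_right_mono) auto
      ultimately show ?thesis by simp
    qed
    thus "\<exists>C. \<forall>n. f n \<le> C * \<epsilon> ^ n" by blast
  qed
next
  assume R: "\<forall>\<epsilon>>0. \<exists>C. \<forall>n. f n \<le> C * \<epsilon> ^ n"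
  show "(\<lambda>n. root n (f n)) \<longlonglongrightarrow> 0"
    unfolding LIMSEQ_def dist_real_def
  proof (intro allI impI)
    fix r :: real assume r: "r > 0"
    obtain C where C: "\<And>n. f n \<le> C * (r/2) ^ n" using R r by (meson half_gt_zero)
    define C' where "C' = max C 1"
    have C': "f n \<le> C' * (r/2) ^ n" for n
    proof -
      have "C * (r/2) ^ n \<le> C' * (r/2) ^ n" using r by (intro mult_right_mono) (auto simp: C'_def)
      thus ?thesis using C[of n] by linarith
    qed
    have "(\<lambda>n. root n C') \<longlonglongrightarrow> 1" by (rule LIMSEQ_root_const) (simp add: C'_def)
    then obtain N where N: "\<And>n. n \<ge> N \<Longrightarrow> \<bar>root n C' - 1\<bar> < 1"
      unfolding LIMSEQ_def dist_real_def by (meson zero_less_one)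
    have "\<bar>root n (f n) - 0\<bar> < r" if n: "n \<ge> Suc N" for n
    proof -
      have n0: "n > 0" using n by simp
      have "root n (f n) \<le> root n (C' * (r/2) ^ n)" using C' n0 by simp
      also have "\<dots> = root n C' * (r/2)" using n0 r
        by (simp add: real_root_mult real_root_power_cancel)
      also have "\<dots> < 2 * (r/2)" using N[of n] n r by (intro mult_strict_right_mono) auto
      finally show ?thesis using nn n0 by simp
    qed
    thus "\<exists>no. \<forall>n\<ge>no. \<bar>root n (f n) - 0\<bar> < r" by blast
  qed
qed

definition qb :: "'a::real_normed_algebra_1 \<Rightarrow> bool" where
  "qb x \<longleftrightarrow> (\<forall>\<epsilon>>0. \<exists>C. \<forall>n. norm (x ^ n) \<le> C * \<epsilon> ^ n)"

lemma quasinilpotent_qb: "quasinilpotent x \<longleftrightarrow> qb x"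
  unfolding quasinilpotent_def qb_def by (rule root_bound_iff) simp

lemma qbD: assumes "qb x" "\<epsilon> > 0" obtains C where "C \<ge> 1" "\<And>n. norm (x ^ n) \<le> C * \<epsilon> ^ n"
proof -
  obtain C where C: "\<And>n. norm (x ^ n) \<le> C * \<epsilon> ^ n" using assms unfolding qb_def by blast
  have "C \<ge> 1" using C[of 0] by simp
  thus ?thesis using C that by blast
qed

lemma comm_power_left:
  fixes x y :: "'a::ring_1"
  assumes "x * y = y * x" shows "x ^ n * y = y * x ^ n"
proof (induction n)
  case (Suc n)
  have "x ^ Suc n * y = x * (x ^ n * y)" by (simp add: mult.assoc)
  also have "\<dots> = x * y * x ^ n" by (simp add: Suc mult.assoc)
  also have "\<dots> = y * x ^ Suc n" by (simp add: assms mult.assoc)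
  finally show ?case .
qed simp

lemma comm_power_mult:
  fixes x y :: "'a::ring_1"
  assumes "x * y = y * x" shows "(x * y) ^ n = x ^ n * y ^ n"
proof (induction n)
  case (Suc n)
  have "(x * y) ^ Suc n = x * y * (x ^ n * y ^ n)" by (simp add: Suc)
  also have "\<dots> = x * (y * x ^ n) * y ^ n" by (simp add: mult.assoc)
  also have "\<dots> = x * (x ^ n * y) * y ^ n" using comm_power_left[OF assms, of n] by simp
  also have "\<dots> = x ^ Suc n * y ^ Suc n" by (simp add: mult.assoc power_commutes)
  finally show ?case .
qed simp

lemma swap_power:
  fixes x y :: "'a::ring_1"
  shows "(y * x) ^ Suc n = y * (x * y) ^ n * x"
proof (induction n)
  case (Suc n)
  have "(y * x) ^ Suc (Suc n) = y * x * (y * (x * y) ^ n * x)" unfolding power_Suc[of "y*x" "Suc n"] Suc.IH ..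
  also have "\<dots> = y * ((x * y) * (x * y) ^ n) * x" by (simp add: mult.assoc)
  finally show ?case by simp
qed simp

lemma qb_comm_mult:
  fixes x y :: "'a::real_normed_algebra_1"
  assumes c: "x * y = y * x" and q: "qb x"
  shows "qb (x * y)"
  unfolding qb_def
proof (intro allI impI)
  fix \<epsilon> :: real assume e: "\<epsilon> > 0"
  define d where "d = \<epsilon> / (norm y + 1)"
  have d: "d > 0" using e unfolding d_def by (intro divide_pos_pos) (auto simp: add_nonneg_pos)
  obtain C where C: "C \<ge> 1" "\<And>n. norm (x ^ n) \<le> C * d ^ n" using qbD[OF q d] by blast
  have "norm ((x * y) ^ n) \<le> C * \<epsilon> ^ n" for n
  proof -
    have "norm ((x * y) ^ n) = norm (x ^ n * y ^ n)" by (simp add: comm_power_mult[OF c])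
    also have "\<dots> \<le> norm (x ^ n) * norm (y ^ n)" by (rule norm_mult_ineq)
    also have "\<dots> \<le> (C * d ^ n) * (norm y + 1) ^ n"
    proof (intro mult_mono C(2))
      show "norm (y ^ n) \<le> (norm y + 1) ^ n"
        by (rule order_trans[OF norm_power_ineq]) (intro power_mono, auto)
      show "0 \<le> C * d ^ n" using C(1) d by simp
    qed simp
    also have "\<dots> = C * \<epsilon> ^ n"
    proof -
      have "norm y + 1 \<noteq> 0" by (smt (verit) norm_ge_zero)
      thus ?thesis by (simp add: d_def power_divide)
    qed
    finally show ?thesis .
  qed
  thus "\<exists>C. \<forall>n. norm ((x * y) ^ n) \<le> C * \<epsilon> ^ n" by blast
qed

lemma qb_comm_mult2:
  fixes x y :: "'a::real_normed_algebra_1"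
  assumes c: "x * y = y * x" and q: "qb y"
  shows "qb (x * y)"
  using qb_comm_mult[of y x] assms by simp

lemma qb_swap:
  fixes x y :: "'a::real_normed_algebra_1"
  assumes q: "qb (x * y)"
  shows "qb (y * x)"
  unfolding qb_def
proof (intro allI impI)
  fix \<epsilon> :: real assume e: "\<epsilon> > 0"
  obtain C where C: "C \<ge> 1" "\<And>n. norm ((x * y) ^ n) \<le> C * \<epsilon> ^ n" using qbD[OF q e] by blast
  define C' where "C' = C * (norm x * norm y / \<epsilon> + 1)"
  have "norm ((y * x) ^ n) \<le> C' * \<epsilon> ^ n" for n
  proof (cases n)
    case 0 thus ?thesis using C e by (simp add: C'_def) (smt (verit) mult_le_cancel_left1 norm_ge_zero divide_nonneg_pos mult_nonneg_nonneg)
  next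
    case (Suc m)
    have "norm ((y * x) ^ n) = norm (y * (x * y) ^ m * x)" by (simp only: Suc swap_power)
    also have "\<dots> \<le> norm y * norm ((x * y) ^ m) * norm x"
      by (meson norm_mult_ineq mult_right_mono norm_ge_zero order_trans)
    also have "\<dots> \<le> norm y * (C * \<epsilon> ^ m) * norm x"
      by (intro mult_right_mono mult_left_mono C(2)) auto
    also have "\<dots> = C * (norm x * norm y / \<epsilon>) * \<epsilon> ^ n" using e by (simp add: Suc field_simps)
    also have "\<dots> \<le> C' * \<epsilon> ^ n" unfolding C'_def using C e
      by (intro mult_right_mono mult_left_mono) auto
    finally show ?thesis .
  qed
  thus "\<exists>C. \<forall>n. norm ((y * x) ^ n) \<le> C * \<epsilon> ^ n" by blast
qed

lemma qb_idem:
  fixes e :: "'a::real_normed_algebra_1"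
  assumes i: "e * e = e" and q: "qb e"
  shows "e = 0"
proof -
  obtain C where C: "C \<ge> 1" "\<And>n. norm (e ^ n) \<le> C * (1/2) ^ n" using qbD[OF q, of "1/2"] by auto
  have pe: "e ^ Suc n = e" for n by (induction n) (auto simp: i)
  have "(\<lambda>n. C * (1/2::real) ^ Suc n) \<longlonglongrightarrow> C * 0"
    by (intro tendsto_mult tendsto_const LIMSEQ_power_zero[THEN LIMSEQ_Suc]) auto
  moreover have "\<exists>N. \<forall>n\<ge>N. norm e \<le> C * (1/2::real) ^ Suc n"
  proof (intro exI allI impI)
    fix n :: nat show "norm e \<le> C * (1/2::real) ^ Suc n" using C(2)[of "Suc n"] pe[of n] by simp
  qed
  ultimately have "norm e \<le> C * 0" by (rule LIMSEQ_le_const)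
  thus ?thesis by simp
qed

lemma gdiD:
  assumes "is_gdrazin_inv x y"
  shows "y * x = x * y" "y * x * y = y" "qb (x - x * x * y)"
  using assms unfolding is_gdrazin_inv_def quasinilpotent_qb power2_eq_square by auto

lemma qb_bound_zero:
  fixes w :: "'a::real_normed_algebra_1"
  assumes "\<And>m. norm w \<le> B * (1/2) ^ m"
  shows "w = 0"
proof -
  have "(\<lambda>m. B * (1/2::real) ^ m) \<longlonglongrightarrow> B * 0"
    by (intro tendsto_mult tendsto_const LIMSEQ_power_zero) auto
  hence "norm w \<le> B * 0" using assms by (intro LIMSEQ_le_const) auto
  thus ?thesis by simp
qed

lemma gdi_facts:
  fixes x y :: "'a::real_normed_algebra_1"
  assumes g: "is_gdrazin_inv x y"
  shows "x * y * (x * y) = x * y" "x * y * x = x * (x * y)" "x * y * y = y" "y * (x * y) = y"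
    "(1 - x*y) * (1 - x*y) = 1 - x*y" "(1 - x*y) * x = x * (1 - x*y)" "x * (1 - x*y) = x - x * x * y"
    "(1 - x*y) * (x*y) = 0" "x*y * (1 - x*y) = 0" "y * x = x * y"
proof -
  note G = gdiD[OF g]
  have y1: "y * x * y = y" by (rule G(2))
  show uu: "x * y * (x * y) = x * y" by (metis y1 G(1) mult.assoc)
  show ux: "x * y * x = x * (x * y)" by (metis G(1) mult.assoc)
  show "x * y * y = y" by (metis y1 G(1))
  show "y * (x * y) = y" by (metis y1 mult.assoc)
  show "(1 - x*y) * (1 - x*y) = 1 - x*y" using uu by (simp add: algebra_simps)
  show "(1 - x*y) * x = x * (1 - x*y)" using ux by (simp add: algebra_simps)
  show "x * (1 - x*y) = x - x * x * y" by (simp add: algebra_simps)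
  show "(1 - x*y) * (x*y) = 0" "x*y * (1 - x*y) = 0" using uu by (simp_all add: algebra_simps)
  show "y * x = x * y" by (rule G(1))
qed

lemma gd_commute:
  fixes x y c :: "'a::real_normed_algebra_1"
  assumes g: "is_gdrazin_inv x y" and cx: "c * x = x * c"
  shows "c * y = y * c"
proof -
  note G = gdiD[OF g]
  note F = gdi_facts[OF g]
  define u where "u = x * y"
  define p where "p = 1 - u"
  define n where "n = x - x * x * y"
  have uu: "u * u = u" unfolding u_def by (rule F(1))
  have uy: "u * y = y" "y * u = y" unfolding u_def using F by auto
  have pp: "p * p = p" unfolding p_def u_def by (rule F(5))
  have px: "p * x = x * p" unfolding p_def u_def by (rule F(6))
  have xpn: "x * p = n" unfolding p_def n_def u_def by (rule F(7))
  have pu: "p * u = 0" "u * p = 0" unfolding p_def u_def using F by auto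
  have cxk: "c * x ^ k = x ^ k * c" for k by (rule comm_power_left[symmetric]) (use cx in simp)
  have xyk: "x ^ Suc k * y ^ Suc k = u" for k
  proof -
    have "x ^ Suc k * y ^ Suc k = u ^ Suc k" unfolding u_def
      by (rule comm_power_mult[symmetric]) (use G in simp)
    also have "\<dots> = u" by (induction k) (auto simp: uu)
    finally show ?thesis .
  qed
  have yxk: "y ^ Suc k * x ^ Suc k = u" for k
  proof -
    have "y ^ Suc k * x ^ Suc k = (y * x) ^ Suc k"
      by (rule comm_power_mult[symmetric]) (use G in simp)
    also have "\<dots> = u ^ Suc k" unfolding u_def using G by simp
    also have "\<dots> = u" by (induction k) (auto simp: uu)
    finally show ?thesis .
  qed
  have pxk: "p * x ^ Suc k = n ^ Suc k" for k
  proof -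
    have "n ^ Suc k = (p * x) ^ Suc k" using xpn px by simp
    also have "\<dots> = p ^ Suc k * x ^ Suc k" by (rule comm_power_mult) (rule px)
    also have "p ^ Suc k = p" by (induction k) (auto simp: pp)
    finally show ?thesis by simp
  qed
  have xkp: "x ^ Suc k * p = n ^ Suc k" for k
    using pxk[of k] comm_power_left[OF px[symmetric], of "Suc k"] by simp
  have qn: "qb n" using G(3) unfolding n_def .
  define d where "d = 1 / (2 * (norm y + 1))"
  have ny: "norm y + 1 > 0" by (smt (verit) norm_ge_zero)
  hence d: "d > 0" unfolding d_def by simp
  obtain C where C: "C \<ge> 1" "\<And>k. norm (n ^ k) \<le> C * d ^ k" using qbD[OF qn d] by blast
  have key: "norm (y ^ Suc m) * norm (n ^ Suc m) \<le> C * (1/2) ^ m" for m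
  proof -
    have "norm (y ^ Suc m) * norm (n ^ Suc m) \<le> (norm y + 1) ^ Suc m * (C * d ^ Suc m)"
      by (intro mult_mono C(2) order_trans[OF norm_power_ineq] power_mono) (use C d in auto)
    also have "\<dots> = C * (1/2) ^ Suc m"
    proof -
      have "norm y + 1 \<noteq> 0" by (smt (verit) norm_ge_zero)
      hence "(norm y + 1) * d = 1/2" unfolding d_def by simp
      hence "(norm y + 1) ^ Suc m * d ^ Suc m = (1/2) ^ Suc m" by (metis power_mult_distrib)
      moreover have "(norm y + 1) ^ Suc m * (C * d ^ Suc m) = C * ((norm y + 1) ^ Suc m * d ^ Suc m)"
        by (simp only: ac_simps)
      ultimately show ?thesis by (simp only:)
    qed
    also have "\<dots> \<le> C * (1/2) ^ m" by (intro mult_left_mono) (use C in auto)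
    finally show ?thesis .
  qed
  have A: "p * c * u = 0"
  proof (rule qb_bound_zero)
    fix m
    have eq: "p * c * u = n ^ Suc m * c * y ^ Suc m"
    proof -
      have "p * c * u = p * c * (x ^ Suc m * y ^ Suc m)" by (simp only: xyk)
      also have "\<dots> = p * (c * x ^ Suc m) * y ^ Suc m" by (simp add: mult.assoc del: power_Suc)
      also have "\<dots> = (p * x ^ Suc m) * c * y ^ Suc m" by (simp add: cxk mult.assoc del: power_Suc)
      finally show ?thesis by (simp only: pxk)
    qed
    have "norm (p * c * u) \<le> norm (n ^ Suc m) * norm c * norm (y ^ Suc m)"
      unfolding eq by (meson norm_mult_ineq mult_right_mono norm_ge_zero order_trans)
    also have "\<dots> = norm c * (norm (y ^ Suc m) * norm (n ^ Suc m))" by simp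
    also have "\<dots> \<le> norm c * (C * (1/2) ^ m)" by (intro mult_left_mono key) auto
    finally show "norm (p * c * u) \<le> (norm c * C) * (1/2) ^ m" by simp
  qed
  have B: "u * c * p = 0"
  proof (rule qb_bound_zero)
    fix m
    have eq: "u * c * p = y ^ Suc m * c * n ^ Suc m"
    proof -
      have "u * c * p = (y ^ Suc m * x ^ Suc m) * c * p" by (simp only: yxk)
      also have "\<dots> = y ^ Suc m * (x ^ Suc m * c) * p" by (simp add: mult.assoc del: power_Suc)
      also have "\<dots> = y ^ Suc m * c * (x ^ Suc m * p)" by (simp add: cxk[symmetric] mult.assoc del: power_Suc)
      finally show ?thesis by (simp only: xkp)
    qed
    have "norm (u * c * p) \<le> norm (y ^ Suc m) * norm c * norm (n ^ Suc m)"
      unfolding eq by (meson norm_mult_ineq mult_right_mono norm_ge_zero order_trans)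
    also have "\<dots> = norm c * (norm (y ^ Suc m) * norm (n ^ Suc m))" by simp
    also have "\<dots> \<le> norm c * (C * (1/2) ^ m)" by (intro mult_left_mono key) auto
    finally show "norm (u * c * p) \<le> (norm c * C) * (1/2) ^ m" by simp
  qed
  have up: "u = 1 - p" unfolding p_def by simp
  have "p * c * (1 - p) = 0" using A up by simp
  hence a1: "p * c = p * c * p" by (simp only: right_diff_distrib mult.right_neutral right_minus_eq)
  have "(1 - p) * c * p = 0" using B up by simp
  hence b1: "c * p = p * c * p" by (simp only: left_diff_distrib mult.left_neutral right_minus_eq)
  have cu: "c * u = u * c" unfolding up using a1 b1 by (simp only: left_diff_distrib right_diff_distrib mult.left_neutral mult.right_neutral)
  have "y * c = y * u * c" using uy by simp
  also have "\<dots> = y * c * u" by (simp only: cu mult.assoc)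
  also have "\<dots> = y * c * x * y" unfolding u_def by (simp only: mult.assoc)
  also have "\<dots> = y * x * c * y" by (simp only: cx mult.assoc)
  also have "\<dots> = u * c * y" unfolding u_def by (simp only: G(1))
  also have "\<dots> = c * u * y" by (simp only: cu)
  also have "\<dots> = c * y" using uy by (simp only: mult.assoc)
  finally show ?thesis by simp
qed

lemma gd_unique:
  fixes x y z :: "'a::real_normed_algebra_1"
  assumes gy: "is_gdrazin_inv x y" and gz: "is_gdrazin_inv x z"
  shows "y = z"
proof -
  note Gy = gdiD[OF gy] and Gz = gdiD[OF gz]
  note Fy = gdi_facts[OF gy] and Fz = gdi_facts[OF gz]
  have zy: "z * y = y * z" by (rule gd_commute[OF gy]) (use Gz in simp)
  have key: "x * y * (1 - x * z) = 0" if gy: "is_gdrazin_inv x y" and gz: "is_gdrazin_inv x z"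
     and zy: "z * y = y * z" for y z
  proof -
    note Gy = gdiD[OF gy] and Gz = gdiD[OF gz]
    note Fy = gdi_facts[OF gy] and Fz = gdi_facts[OF gz]
    define n where "n = x - x * x * z"
    have qn: "qb n" unfolding n_def by (rule Gz(3))
    have yn: "y * n = n * y" unfolding n_def
      by (simp add: algebra_simps) (metis Gy(1) zy mult.assoc)
    have eq: "x * y * (1 - x * z) = n * y"
    proof -
      have "x * y * (1 - x * z) = y * (x * (1 - x * z))" using Gy(1) by (metis mult.assoc)
      also have "\<dots> = y * n" unfolding n_def using Fz(7) by simp
      finally show ?thesis using yn by simp
    qed
    have comm_uv: "x * y * (x * z) = x * z * (x * y)"
      by (metis Gy(1) Gz(1) zy mult.assoc)
    have idem: "(x * y * (1 - x * z)) * (x * y * (1 - x * z)) = x * y * (1 - x * z)"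
    proof -
      have "(x * y * (1 - x * z)) * (x * y * (1 - x * z)) = (x * y * (x * y)) * ((1 - x * z) * (1 - x * z))"
        using comm_uv by (simp add: algebra_simps) (metis mult.assoc)
      thus ?thesis using Fy(1) Fz(5) by simp
    qed
    show ?thesis by (rule qb_idem[OF idem]) (unfold eq, rule qb_comm_mult[OF yn[symmetric] qn])
  qed
  have k1: "x * y * (1 - x * z) = 0" by (rule key[OF gy gz zy])
  have k2: "x * z * (1 - x * y) = 0" by (rule key[OF gz gy zy[symmetric]])
  have comm_uv: "x * y * (x * z) = x * z * (x * y)"
    by (metis Gy(1) Gz(1) zy mult.assoc)
  have uyz: "x * y = x * y * (x * z)" using k1 by (simp add: right_diff_distrib)
  have uzy: "x * z = x * z * (x * y)" using k2 by (simp add: right_diff_distrib)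
  have ueq: "x * y = x * z" using uyz uzy comm_uv by simp
  have "y = x * y * y" using Fy(3) by simp
  also have "\<dots> = x * z * y" using ueq by simp
  also have "\<dots> = z * (x * y)" by (metis Gz(1) mult.assoc)
  also have "\<dots> = z * (x * z)" using ueq by simp
  also have "\<dots> = z" using Fz(4) by simp
  finally show ?thesis .
qed

lemma gd_eq: "is_gdrazin_inv x y \<Longrightarrow> gd x = y"
  unfolding gd_def by (rule the_equality) (auto intro: gd_unique)

lemma gd_spec: "gdrazin_invertible x \<Longrightarrow> is_gdrazin_inv x (gd x)"
  unfolding gdrazin_invertible_def using gd_eq by metis

lemma cline:
  fixes b c y :: "'a::real_normed_algebra_1"
  assumes g: "is_gdrazin_inv (c * b) y"
  shows "is_gdrazin_inv (b * c) (b * y * y * c)"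
proof -
  note G = gdiD[OF g] and F = gdi_facts[OF g]
  have y1: "y * (c * b) = c * b * y" using G(1) .
  have A: "y * y * (c * b) = y" using F(4) y1 by (metis mult.assoc)
  have B: "(c * b) * y * y = y" using F(3) .
  have comm: "b * y * y * c * (b * c) = b * c * (b * y * y * c)"
  proof -
    have "b * y * y * c * (b * c) = b * (y * y * (c * b)) * c" by (simp add: mult.assoc)
    also have "\<dots> = b * y * c" using A by simp
    also have "\<dots> = b * ((c * b) * y * y) * c" using B by simp
    also have "\<dots> = b * c * (b * y * y * c)" by (simp add: mult.assoc)
    finally show ?thesis .
  qed
  have inv: "b * y * y * c * (b * c) * (b * y * y * c) = b * y * y * c"
  proof -
    have "b * y * y * c * (b * c) * (b * y * y * c) = b * (y * y * (c * b)) * (c * b) * y * y * c"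
      by (simp add: mult.assoc)
    also have "\<dots> = b * y * (c * b) * y * y * c" using A by simp
    also have "\<dots> = b * (y * (c * b) * y) * y * c" by (simp add: mult.assoc)
    also have "\<dots> = b * y * y * c" using G(2) by simp
    finally show ?thesis .
  qed
  define p where "p = 1 - c * b * y"
  define n where "n = c * b - c * b * (c * b) * y"
  have qn: "qb n" using G(3) unfolding n_def .
  have np: "n = c * b * p" unfolding n_def p_def by (simp add: algebra_simps)
  have pcb: "p * (c * b) = c * b * p" unfolding p_def using F(6) by simp
  have pp: "p * p = p" unfolding p_def using F(5) by simp
  have d: "b * c - b * c * (b * c) * (b * y * y * c) = b * p * c"
  proof -
    have "b * c * (b * c) * (b * y * y * c) = b * ((c * b) * (c * b) * y * y) * c"
      by (simp add: mult.assoc)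
    also have "(c * b) * (c * b) * y * y = c * b * y"
      using B by (metis mult.assoc)
    finally show ?thesis unfolding p_def by (simp add: algebra_simps)
  qed
  have pw: "(b * p * c) ^ Suc k = b * n ^ k * p * c" for k
  proof (induction k)
    case 0 thus ?case by simp
  next
    case (Suc k)
    have "(b * p * c) ^ Suc (Suc k) = b * p * c * (b * n ^ k * p * c)"
      by (simp only: power_Suc[of _ "Suc k"] Suc.IH)
    also have "\<dots> = b * (p * (c * b) * n ^ k) * p * c" by (simp add: mult.assoc)
    also have "p * (c * b) * n ^ k = n * n ^ k" using pcb np by (simp add: mult.assoc)
    finally show ?case by simp
  qed
  have "qb (b * p * c)"
    unfolding qb_def
  proof (intro allI impI)
    fix \<epsilon> :: real assume e: "\<epsilon> > 0"
    obtain C where C: "C \<ge> 1" "\<And>k. norm (n ^ k) \<le> C * \<epsilon> ^ k" using qbD[OF qn e] by blast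
    define C' where "C' = C * (norm b * norm p * norm c / \<epsilon> + 1)"
    have "norm ((b * p * c) ^ k) \<le> C' * \<epsilon> ^ k" for k
    proof (cases k)
      case 0 thus ?thesis using C e by (simp add: C'_def) (smt (verit) mult_le_cancel_left1 norm_ge_zero divide_nonneg_pos mult_nonneg_nonneg)
    next
      case (Suc m)
      have "norm ((b * p * c) ^ k) = norm (b * n ^ m * p * c)" by (simp only: Suc pw)
      also have "\<dots> \<le> norm b * norm (n ^ m) * norm p * norm c"
        by (meson norm_mult_ineq mult_right_mono norm_ge_zero order_trans)
      also have "\<dots> \<le> norm b * (C * \<epsilon> ^ m) * norm p * norm c"
        by (intro mult_right_mono mult_left_mono C(2)) auto
      also have "\<dots> = C * (norm b * norm p * norm c / \<epsilon>) * \<epsilon> ^ k" using e by (simp add: Suc field_simps)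
      also have "\<dots> \<le> C' * \<epsilon> ^ k" unfolding C'_def using C e
        by (intro mult_right_mono mult_left_mono) auto
      finally show ?thesis .
    qed
    thus "\<exists>C. \<forall>k. norm ((b * p * c) ^ k) \<le> C * \<epsilon> ^ k" by blast
  qed
  thus ?thesis unfolding is_gdrazin_inv_def quasinilpotent_qb power2_eq_square
    using comm inv d by simp
qed

lemma scaleC_zero_right[simp]: "scaleC c (0::'a::complex_banach_algebra_1) = 0"
  by (metis add_cancel_right_right scaleC_add_right)

lemma scaleC_zero_left[simp]: "scaleC 0 (x::'a::complex_banach_algebra_1) = 0"
  by (metis add_cancel_right_right add_0 scaleC_add_left)

lemma scaleC_sum: "scaleC c (\<Sum>i\<in>A. f i) = (\<Sum>i\<in>A. scaleC c (f i :: 'a::complex_banach_algebra_1))"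
  by (induction A rule: infinite_finite_induct) (auto simp: scaleC_add_right)

lemma scaleC_sum_left: "scaleC (\<Sum>i\<in>A. f i) (x :: 'a::complex_banach_algebra_1) = (\<Sum>i\<in>A. scaleC (f i) x)"
  by (induction A rule: infinite_finite_induct) (auto simp: scaleC_add_left)

lemma lam_pow_comm:
  fixes X Z :: "'a::complex_banach_algebra_1"
  assumes c: "Z * X = scaleC \<mu> (X * Z)"
  shows "Z * X ^ k = scaleC (\<mu> ^ k) (X ^ k * Z)"
proof (induction k)
  case 0 thus ?case by (simp add: scaleC_one)
next
  case (Suc k)
  have "Z * X ^ Suc k = (Z * X) * X ^ k" by (simp add: mult.assoc)
  also have "\<dots> = scaleC \<mu> (X * (Z * X ^ k))" by (simp add: c mult_scaleC_left mult.assoc)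
  also have "\<dots> = scaleC \<mu> (X * scaleC (\<mu> ^ k) (X ^ k * Z))" by (simp add: Suc)
  also have "\<dots> = scaleC (\<mu> ^ Suc k) (X ^ Suc k * Z)"
    by (simp add: mult_scaleC_right scaleC_scaleC mult.assoc)
  finally show ?case .
qed

lemma lam_expand:
  fixes X Z :: "'a::complex_banach_algebra_1"
  assumes c: "Z * X = scaleC \<mu> (X * Z)" and m: "cmod \<mu> \<le> 1"
  shows "\<exists>cf. (X + Z) ^ n = (\<Sum>k\<le>n. scaleC (cf k) (X ^ k * Z ^ (n - k)))
              \<and> (\<forall>k\<le>n. cmod (cf k) \<le> real (n choose k))"
proof (induction n)
  case 0
  show ?case by (rule exI[of _ "\<lambda>_. 1"]) (simp add: scaleC_one)
next
  case (Suc n)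
  then obtain cf where E: "(X + Z) ^ n = (\<Sum>k\<le>n. scaleC (cf k) (X ^ k * Z ^ (n - k)))"
    and B: "\<forall>k\<le>n. cmod (cf k) \<le> real (n choose k)" by blast
  define cf' where "cf' k = (if k = 0 then 0 else cf (k - 1)) + (if k \<le> n then \<mu> ^ k * cf k else 0)" for k
  have "(X + Z) ^ Suc n = X * (X + Z) ^ n + Z * (X + Z) ^ n" by (simp add: distrib_right)
  also have "X * (X + Z) ^ n = (\<Sum>k\<le>n. scaleC (cf k) (X ^ Suc k * Z ^ (n - k)))"
    unfolding E by (simp add: sum_distrib_left mult_scaleC_right mult.assoc)
  also have "Z * (X + Z) ^ n = (\<Sum>k\<le>n. scaleC (\<mu> ^ k * cf k) (X ^ k * Z ^ Suc (n - k)))"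
    unfolding E
    by (simp add: sum_distrib_left mult_scaleC_right scaleC_scaleC lam_pow_comm[OF c]
        mult_scaleC_left flip: mult.assoc) (simp add: mult.assoc mult.commute)
  also have "(\<Sum>k\<le>n. scaleC (cf k) (X ^ Suc k * Z ^ (n - k))) + (\<Sum>k\<le>n. scaleC (\<mu> ^ k * cf k) (X ^ k * Z ^ Suc (n - k)))
      = (\<Sum>k\<le>Suc n. scaleC (cf' k) (X ^ k * Z ^ (Suc n - k)))"
  proof -
    have s1: "(\<Sum>k\<le>Suc n. scaleC (if k = 0 then 0 else cf (k - 1)) (X ^ k * Z ^ (Suc n - k)))
        = (\<Sum>k\<le>n. scaleC (cf k) (X ^ Suc k * Z ^ (n - k)))"
      by (subst sum.atMost_Suc_shift) simp
    have s2: "(\<Sum>k\<le>Suc n. scaleC (if k \<le> n then \<mu> ^ k * cf k else 0) (X ^ k * Z ^ (Suc n - k)))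
        = (\<Sum>k\<le>n. scaleC (\<mu> ^ k * cf k) (X ^ k * Z ^ Suc (n - k)))"
      by (simp add: Suc_diff_le)
    show ?thesis unfolding cf'_def scaleC_add_left sum.distrib s1 s2 ..
  qed
  finally have E': "(X + Z) ^ Suc n = (\<Sum>k\<le>Suc n. scaleC (cf' k) (X ^ k * Z ^ (Suc n - k)))" .
  have B': "cmod (cf' k) \<le> real (Suc n choose k)" if "k \<le> Suc n" for k
  proof (cases k)
    case 0 thus ?thesis using B[rule_format, of 0] by (simp add: cf'_def)
  next
    case (Suc j)
    have "cmod (cf' k) \<le> cmod (cf j) + (if Suc j \<le> n then cmod (\<mu> ^ Suc j * cf (Suc j)) else 0)"
      unfolding cf'_def Suc by (auto intro: norm_triangle_ineq)
    also have "\<dots> \<le> real (n choose j) + real (n choose Suc j)"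
    proof -
      have "cmod (cf j) \<le> real (n choose j)" using B that Suc by auto
      moreover have "(if Suc j \<le> n then cmod (\<mu> ^ Suc j * cf (Suc j)) else 0) \<le> real (n choose Suc j)"
      proof (cases "Suc j \<le> n")
        case True
        have "cmod (\<mu> ^ Suc j * cf (Suc j)) = cmod \<mu> ^ Suc j * cmod (cf (Suc j))" by (simp add: norm_mult norm_power)
        also have "\<dots> \<le> 1 * cmod (cf (Suc j))" by (intro mult_right_mono power_le_one) (use m in auto)
        also have "\<dots> \<le> real (n choose Suc j)" using B True by auto
        finally show ?thesis using True by simp
      qed simp
      ultimately show ?thesis by linarith
    qed
    also have "\<dots> = real (Suc n choose k)" unfolding Suc by simp
    finally show ?thesis .
  qed
  show ?case using E' B' by blast
qed

lemma qb_lam_sum1: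
  fixes X Z :: "'a::complex_banach_algebra_1"
  assumes c: "Z * X = scaleC \<mu> (X * Z)" and m: "cmod \<mu> \<le> 1" and qx: "qb X" and qz: "qb Z"
  shows "qb (X + Z)"
  unfolding qb_def
proof (intro allI impI)
  fix \<epsilon> :: real assume e: "\<epsilon> > 0"
  obtain C1 where C1: "C1 \<ge> 1" "\<And>n. norm (X ^ n) \<le> C1 * (\<epsilon>/2) ^ n" using qbD[OF qx, of "\<epsilon>/2"] e by auto
  obtain C2 where C2: "C2 \<ge> 1" "\<And>n. norm (Z ^ n) \<le> C2 * (\<epsilon>/2) ^ n" using qbD[OF qz, of "\<epsilon>/2"] e by auto
  have "norm ((X + Z) ^ n) \<le> (C1 * C2) * \<epsilon> ^ n" for n
  proof -
    obtain cf where E: "(X + Z) ^ n = (\<Sum>k\<le>n. scaleC (cf k) (X ^ k * Z ^ (n - k)))"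
      and B: "\<forall>k\<le>n. cmod (cf k) \<le> real (n choose k)" using lam_expand[OF c m] by blast
    have "norm ((X + Z) ^ n) \<le> (\<Sum>k\<le>n. norm (scaleC (cf k) (X ^ k * Z ^ (n - k))))"
      unfolding E by (rule norm_sum)
    also have "\<dots> \<le> (\<Sum>k\<le>n. real (n choose k) * ((C1 * C2) * ((\<epsilon>/2) ^ k * (\<epsilon>/2) ^ (n - k))))"
    proof (rule sum_mono)
      fix k assume k: "k \<in> {..n}"
      have "norm (scaleC (cf k) (X ^ k * Z ^ (n - k))) = cmod (cf k) * norm (X ^ k * Z ^ (n - k))"
        by (simp add: norm_scaleC)
      also have "\<dots> \<le> real (n choose k) * (norm (X ^ k) * norm (Z ^ (n - k)))"
        using B k by (intro mult_mono norm_mult_ineq) auto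
      also have "\<dots> \<le> real (n choose k) * ((C1 * (\<epsilon>/2) ^ k) * (C2 * (\<epsilon>/2) ^ (n - k)))"
        using e C1 C2 by (intro mult_left_mono mult_mono) auto
      finally show "norm (scaleC (cf k) (X ^ k * Z ^ (n - k))) \<le> real (n choose k) * ((C1 * C2) * ((\<epsilon>/2) ^ k * (\<epsilon>/2) ^ (n - k)))"
        by (simp add: ac_simps)
    qed
    also have "\<dots> = (C1 * C2) * (\<Sum>k\<le>n. real (n choose k) * (\<epsilon>/2) ^ k * (\<epsilon>/2) ^ (n - k))"
      by (simp add: sum_distrib_left ac_simps)
    also have "(\<Sum>k\<le>n. real (n choose k) * (\<epsilon>/2) ^ k * (\<epsilon>/2) ^ (n - k)) = (\<epsilon>/2 + \<epsilon>/2) ^ n"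
      by (rule binomial_ring[symmetric])
    finally show ?thesis by simp
  qed
  thus "\<exists>C. \<forall>n. norm ((X + Z) ^ n) \<le> C * \<epsilon> ^ n" by blast
qed

lemma qb_lam_sum:
  fixes X Z :: "'a::complex_banach_algebra_1"
  assumes c: "Z * X = scaleC \<mu> (X * Z)" and m: "\<mu> \<noteq> 0" and qx: "qb X" and qz: "qb Z"
  shows "qb (X + Z)"
proof (cases "cmod \<mu> \<le> 1")
  case True thus ?thesis using qb_lam_sum1[OF c True qx qz] by simp
next
  case False
  have c': "X * Z = scaleC (1/\<mu>) (Z * X)" using m by (simp add: c scaleC_scaleC scaleC_one)
  have "cmod (1/\<mu>) \<le> 1" using False by (simp add: norm_divide divide_le_eq)
  from qb_lam_sum1[OF c' this qz qx] show ?thesis by (simp add: add.commute)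
qed

lemma iter_scaled:
  fixes w s t :: "'a::complex_banach_algebra_1"
  assumes "w = scaleC c (s * w * t)"
  shows "w = scaleC (c ^ n) (s ^ n * w * t ^ n)"
proof (induction n)
  case 0 thus ?case by (simp add: scaleC_one)
next
  case (Suc n)
  have sc: "s ^ n * (s * z) = s * (s ^ n * z)" for z by (metis mult.assoc power_commutes)
  have "w = scaleC (c ^ n) (s ^ n * scaleC c (s * w * t) * t ^ n)" using Suc assms by simp
  also have "\<dots> = scaleC (c ^ Suc n) (s ^ Suc n * w * t ^ Suc n)"
    by (simp add: mult_scaleC_left mult_scaleC_right scaleC_scaleC mult.assoc sc mult.commute[of "c ^ n" c])
  finally show ?case .
qed

lemma iter_zero_right:
  fixes w s t m :: "'a::complex_banach_algebra_1"
  assumes w: "w = scaleC c (s * w * t)" and wt: "\<And>n. w * t ^ n = w * m ^ n" and qm: "qb m"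
  shows "w = 0"
proof -
  define d where "d = 1 / (2 * (cmod c + 1) * (norm s + 1))"
  have pos: "cmod c + 1 > 0" "norm s + 1 > 0" by (smt (verit) norm_ge_zero)+
  hence d: "d > 0" unfolding d_def by simp
  obtain C where C: "C \<ge> 1" "\<And>k. norm (m ^ k) \<le> C * d ^ k" using qbD[OF qm d] by blast
  show ?thesis
  proof (rule qb_bound_zero)
    fix n
    have "norm w = norm (scaleC (c ^ n) (s ^ n * w * m ^ n))"
      using iter_scaled[OF w, of n] wt[of n] by (simp add: mult.assoc)
    also have "\<dots> \<le> cmod c ^ n * (norm (s ^ n) * norm w * norm (m ^ n))"
      by (simp add: norm_scaleC norm_power) (meson norm_mult_ineq mult_right_mono norm_ge_zero order_trans mult_left_mono zero_le_power)
    also have "\<dots> \<le> (cmod c + 1) ^ n * ((norm s + 1) ^ n * norm w * (C * d ^ n))"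
      by (intro mult_mono power_mono order_trans[OF norm_power_ineq] C(2)) (use C d in auto)
    also have "\<dots> = (C * norm w) * ((cmod c + 1) * (norm s + 1) * d) ^ n"
      by (simp add: power_mult_distrib ac_simps)
    also have "(cmod c + 1) * (norm s + 1) * d = 1/2" unfolding d_def using pos by simp
    finally show "norm w \<le> (C * norm w) * (1/2) ^ n" .
  qed
qed

lemma iter_zero_left:
  fixes w s t m :: "'a::complex_banach_algebra_1"
  assumes w: "w = scaleC c (s * w * t)" and wt: "\<And>n. s ^ n * w = m ^ n * w" and qm: "qb m"
  shows "w = 0"
proof -
  define d where "d = 1 / (2 * (cmod c + 1) * (norm t + 1))"
  have pos: "cmod c + 1 > 0" "norm t + 1 > 0" by (smt (verit) norm_ge_zero)+
  hence d: "d > 0" unfolding d_def by simp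
  obtain C where C: "C \<ge> 1" "\<And>k. norm (m ^ k) \<le> C * d ^ k" using qbD[OF qm d] by blast
  show ?thesis
  proof (rule qb_bound_zero)
    fix n
    have "norm w = norm (scaleC (c ^ n) (m ^ n * w * t ^ n))"
      using iter_scaled[OF w, of n] wt[of n] by (simp add: mult.assoc)
    also have "\<dots> \<le> cmod c ^ n * (norm (m ^ n) * norm w * norm (t ^ n))"
      by (simp add: norm_scaleC norm_power) (meson norm_mult_ineq mult_right_mono norm_ge_zero order_trans mult_left_mono zero_le_power)
    also have "\<dots> \<le> (cmod c + 1) ^ n * ((C * d ^ n) * norm w * (norm t + 1) ^ n)"
      by (intro mult_mono power_mono order_trans[OF norm_power_ineq] C(2)) (use C d in auto)
    also have "\<dots> = (C * norm w) * ((cmod c + 1) * (norm t + 1) * d) ^ n"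
      by (simp add: power_mult_distrib ac_simps)
    also have "(cmod c + 1) * (norm t + 1) * d = 1/2" unfolding d_def using pos by simp
    finally show "norm w \<le> (C * norm w) * (1/2) ^ n" .
  qed
qed

theorem abstract_main:
  fixes P Q a b :: "'a::complex_banach_algebra_1"
  assumes lam: "lam \<noteq> 0" and gP: "is_gdrazin_inv P a" and gQ: "is_gdrazin_inv Q b"
    and h: "Q * P = scaleC lam ((1 - Q * b) * P * Q * (1 - P * a))"
  shows "a * Q = 0" "P * b = 0" "a * (1 - Q * b) + (1 - P * a) * b = a + b"
    "is_gdrazin_inv (P + Q) (a + b)"
proof -
  note GP = gdiD[OF gP] and FP = gdi_facts[OF gP]
  note GQ = gdiD[OF gQ] and FQ = gdi_facts[OF gQ]
  have QPe: "Q * P * (P * a) = 0"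
  proof -
    have "Q * P * (P * a) = scaleC lam ((1 - Q * b) * P * Q * ((1 - P * a) * (P * a)))"
      using h by (simp add: mult_scaleC_left mult.assoc)
    thus ?thesis using FP(8) by simp
  qed
  have Qe: "Q * (P * a) = 0"
  proof -
    have "Q * (P * a) = Q * (P * (P * a * a))" using FP(3) by simp
    also have "\<dots> = Q * P * (P * a) * a" by (simp only: mult.assoc)
    finally show ?thesis using QPe by simp
  qed
  have fQP: "Q * b * (Q * P) = 0"
  proof -
    have "Q * b * (Q * P) = scaleC lam ((Q * b * (1 - Q * b)) * P * Q * (1 - P * a))"
      using h by (simp add: mult_scaleC_right mult.assoc)
    thus ?thesis using FQ(9) by simp
  qed
  have fP: "Q * b * P = 0"
  proof -
    have "Q * b * P = b * Q * P" using GQ(1) by simp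
    also have "\<dots> = b * (Q * b) * Q * P" using FQ(4) by simp
    also have "\<dots> = b * (Q * b * (Q * P))" by (simp only: mult.assoc)
    finally show ?thesis using fQP by simp
  qed
  have Qp: "Q * (1 - P * a) = Q" using Qe by (simp add: right_diff_distrib)
  have qP: "(1 - Q * b) * P = P" using fP by (simp add: left_diff_distrib)
  have QPl: "Q * P = scaleC lam (P * Q)"
  proof -
    have "(1 - Q * b) * P * Q * (1 - P * a) = ((1 - Q * b) * P) * (Q * (1 - P * a))" by (simp only: mult.assoc)
    thus ?thesis using h qP Qp by simp
  qed
  have PQ: "P * Q = scaleC (1/lam) (Q * P)" using lam by (simp add: QPl scaleC_scaleC scaleC_one)
  define c where "c = 1 / lam"
  have aQ: "a * Q = 0"
  proof (rule iter_zero_right)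
    show "a * Q = scaleC c (a * (a * Q) * P)"
    proof -
      have "a * Q = a * (P * a) * Q" using FP(4) by simp
      also have "\<dots> = a * (a * P) * Q" using GP(1) by simp
      also have "\<dots> = a * a * (P * Q)" by (simp only: mult.assoc)
      also have "\<dots> = scaleC c (a * a * (Q * P))" unfolding PQ c_def by (simp add: mult_scaleC_right)
      also have "\<dots> = scaleC c (a * (a * Q) * P)" by (simp only: mult.assoc)
      finally show ?thesis .
    qed
    show "qb (P * (1 - P * a))" using GP(3) FP(7) by simp
    fix n
    have pcomm: "(1 - P * a) * P = P * (1 - P * a)" by (rule FP(6))
    have Qpn: "Q * (1 - P * a) ^ n = Q" by (induction n) (simp_all add: mult.assoc[symmetric] Qp)
    have "(P * (1 - P * a)) ^ n = (1 - P * a) ^ n * P ^ n"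
      using comm_power_mult[OF pcomm, of n] pcomm by simp
    hence "a * Q * (P * (1 - P * a)) ^ n = a * (Q * (1 - P * a) ^ n) * P ^ n" by (simp add: mult.assoc)
    thus "a * Q * P ^ n = a * Q * (P * (1 - P * a)) ^ n" using Qpn by simp
  qed
  have Pb: "P * b = 0"
  proof (rule iter_zero_left)
    show "P * b = scaleC c (Q * (P * b) * b)"
    proof -
      have "P * b = P * (Q * b * b)" using FQ(3) by simp
      also have "\<dots> = (P * Q) * b * b" by (simp only: mult.assoc)
      also have "\<dots> = scaleC c (Q * P * b * b)" unfolding PQ c_def by (simp add: mult_scaleC_left)
      also have "\<dots> = scaleC c (Q * (P * b) * b)" by (simp only: mult.assoc)
      finally show ?thesis .
    qed
    show "qb (Q * (1 - Q * b))" using GQ(3) FQ(7) by simp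
    fix n
    have qcomm: "(1 - Q * b) * Q = Q * (1 - Q * b)" by (rule FQ(6))
    have qPn: "(1 - Q * b) ^ n * P = P" by (induction n) (simp_all add: mult.assoc qP)
    have "(Q * (1 - Q * b)) ^ n = Q ^ n * (1 - Q * b) ^ n"
      using comm_power_mult[OF qcomm[symmetric], of n] by simp
    hence "(Q * (1 - Q * b)) ^ n * (P * b) = Q ^ n * ((1 - Q * b) ^ n * P) * b" by (simp add: mult.assoc)
    thus "Q ^ n * (P * b) = (Q * (1 - Q * b)) ^ n * (P * b)" using qPn by (simp add: mult.assoc)
  qed
  show "a * Q = 0" "P * b = 0" by (fact aQ, fact Pb)
  have eQ: "P * a * Q = 0" using aQ GP(1) by (metis mult.assoc mult_zero_right)
  have Qa: "Q * a = 0" using Qe FP(3) by (metis mult.assoc mult_zero_left)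
  have bP: "b * P = 0" using fP FQ(4) by (metis mult.assoc mult_zero_right)
  have Pf: "P * (Q * b) = 0" using Pb GQ(1) by (metis mult.assoc mult_zero_left)
  have eb: "P * a * b = 0" using Pb GP(1) by (metis mult.assoc mult_zero_right)
  have fa: "Q * b * a = 0" using Qa GQ(1) by (metis mult.assoc mult_zero_right)
  show "a * (1 - Q * b) + (1 - P * a) * b = a + b"
  proof -
    have "a * (Q * b) = 0" using aQ by (metis mult.assoc mult_zero_left)
    thus ?thesis using eb by (simp add: algebra_simps)
  qed
  have YM: "(a + b) * (P + Q) = P * a + Q * b"
    using aQ bP GP(1) GQ(1) by (simp add: algebra_simps)
  have MY: "(P + Q) * (a + b) = P * a + Q * b"
    using Pb Qa by (simp add: algebra_simps)
  have YMY: "(a + b) * (P + Q) * (a + b) = a + b"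
  proof -
    have "(a + b) * (P + Q) * (a + b) = (P * a + Q * b) * (a + b)" using YM by simp
    also have "\<dots> = P * a * a + P * a * b + Q * b * a + Q * b * b" by (simp add: algebra_simps)
    also have "\<dots> = a + b" using FP(3) FQ(3) eb fa by simp
    finally show ?thesis .
  qed
  define nP where "nP = P * (1 - P * a)"
  define nQ where "nQ = Q * (1 - Q * b)"
  have qnP: "qb nP" using GP(3) FP(7) unfolding nP_def by simp
  have qnQ: "qb nQ" using GQ(3) FQ(7) unfolding nQ_def by simp
  have d: "(P + Q) - (P + Q) * (P + Q) * (a + b) = nP + nQ"
  proof -
    have "(P + Q) * (P + Q) * (a + b) = (P + Q) * (P * a + Q * b)" using MY by (simp add: mult.assoc)
    also have "\<dots> = P * (P * a) + P * (Q * b) + Q * (P * a) + Q * (Q * b)" by (simp add: algebra_simps)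
    also have "\<dots> = P * P * a + Q * Q * b" using Pf Qe by (simp add: mult.assoc)
    finally show ?thesis unfolding nP_def nQ_def by (simp add: algebra_simps)
  qed
  have pQ: "(1 - P * a) * Q = Q" using eQ by (simp add: left_diff_distrib)
  have c1: "nQ * nP = Q * P"
  proof -
    have "nQ * nP = Q * ((1 - Q * b) * P) * (1 - P * a)" unfolding nQ_def nP_def by (simp only: mult.assoc)
    also have "\<dots> = Q * (1 - P * a) * P" using qP FP(6) by (simp add: mult.assoc)
    finally show ?thesis using Qp by simp
  qed
  have c2: "nP * nQ = P * Q"
  proof -
    have "nP * nQ = P * ((1 - P * a) * Q) * (1 - Q * b)" unfolding nQ_def nP_def by (simp only: mult.assoc)
    also have "\<dots> = P * Q - P * (Q * b) * Q" using pQ GQ(1) by (simp add: algebra_simps)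
    finally show ?thesis using Pf by simp
  qed
  have "nQ * nP = scaleC lam (nP * nQ)" using c1 c2 QPl by simp
  hence "qb (nP + nQ)" by (rule qb_lam_sum[OF _ lam qnP qnQ])
  thus "is_gdrazin_inv (P + Q) (a + b)"
    unfolding is_gdrazin_inv_def quasinilpotent_qb power2_eq_square
    using YM MY YMY d by simp
qed

datatype 'a m2 = M2 (e11: 'a) (e12: 'a) (e21: 'a) (e22: 'a)

lemma m2_eqI: "e11 x = e11 y \<Longrightarrow> e12 x = e12 y \<Longrightarrow> e21 x = e21 y \<Longrightarrow> e22 x = e22 y \<Longrightarrow> x = y"
  by (cases x; cases y) auto

instantiation m2 :: (zero) zero begin
definition "0 = M2 0 0 0 0"
instance ..
end

instantiation m2 :: ("{zero,one}") one begin
definition "1 = M2 1 0 0 1"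
instance ..
end

instantiation m2 :: (plus) plus begin
definition "x + y = M2 (e11 x + e11 y) (e12 x + e12 y) (e21 x + e21 y) (e22 x + e22 y)"
instance ..
end

instantiation m2 :: (minus) minus begin
definition "x - y = M2 (e11 x - e11 y) (e12 x - e12 y) (e21 x - e21 y) (e22 x - e22 y)"
instance ..
end

instantiation m2 :: (uminus) uminus begin
definition "- x = M2 (- e11 x) (- e12 x) (- e21 x) (- e22 x)"
instance ..
end

instantiation m2 :: ("{plus,times}") times begin
definition "x * y = M2 (e11 x * e11 y + e12 x * e21 y) (e11 x * e12 y + e12 x * e22 y)
                       (e21 x * e11 y + e22 x * e21 y) (e21 x * e12 y + e22 x * e22 y)"
instance ..
end

lemma m2_sel_zero[simp]: "e11 0 = 0" "e12 0 = 0" "e21 0 = 0" "e22 0 = 0"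
  by (simp_all add: zero_m2_def)
lemma m2_sel_one[simp]: "e11 1 = 1" "e12 1 = 0" "e21 1 = 0" "e22 1 = 1"
  by (simp_all add: one_m2_def)
lemma m2_sel_plus[simp]: "e11 (x + y) = e11 x + e11 y" "e12 (x + y) = e12 x + e12 y" "e21 (x + y) = e21 x + e21 y" "e22 (x + y) = e22 x + e22 y"
  by (simp_all add: plus_m2_def)
lemma m2_sel_minus[simp]: "e11 (x - y) = e11 x - e11 y" "e12 (x - y) = e12 x - e12 y" "e21 (x - y) = e21 x - e21 y" "e22 (x - y) = e22 x - e22 y"
  by (simp_all add: minus_m2_def)
lemma m2_sel_uminus[simp]: "e11 (- x) = - e11 x" "e12 (- x) = - e12 x" "e21 (- x) = - e21 x" "e22 (- x) = - e22 x"
  by (simp_all add: uminus_m2_def)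
lemma m2_sel_times[simp]:
  "e11 (x * y) = e11 x * e11 y + e12 x * e21 y" "e12 (x * y) = e11 x * e12 y + e12 x * e22 y"
  "e21 (x * y) = e21 x * e11 y + e22 x * e21 y" "e22 (x * y) = e21 x * e12 y + e22 x * e22 y"
  by (simp_all add: times_m2_def)

instance m2 :: (ab_group_add) ab_group_add
proof
  fix a b c :: "'a m2"
  show "a + b + c = a + (b + c)" by (rule m2_eqI) (simp_all add: add.assoc)
  show "a + b = b + a" by (rule m2_eqI) (simp_all add: add.commute)
  show "0 + a = a" by (rule m2_eqI) simp_all
  show "- a + a = 0" by (rule m2_eqI) simp_all
  show "a - b = a + - b" by (rule m2_eqI) simp_all
qed

instance m2 :: (ring_1) ring_1
proof
  fix a b c :: "'a m2"
  show "a * b * c = a * (b * c)" by (rule m2_eqI) (simp_all add: algebra_simps)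
  show "(a + b) * c = a * c + b * c" by (rule m2_eqI) (simp_all add: algebra_simps)
  show "a * (b + c) = a * b + a * c" by (rule m2_eqI) (simp_all add: algebra_simps)
  show "1 * a = a" by (rule m2_eqI) simp_all
  show "a * 1 = a" by (rule m2_eqI) simp_all
  show "(0::'a m2) \<noteq> 1" by (metis m2_sel_zero(1) m2_sel_one(1) zero_neq_one)
qed

instantiation m2 :: (real_vector) real_vector begin
definition "scaleR r x = M2 (scaleR r (e11 x)) (scaleR r (e12 x)) (scaleR r (e21 x)) (scaleR r (e22 x))"
lemma m2_scaleR_simps[simp]:
  "e11 (scaleR r x) = scaleR r (e11 x)" "e12 (scaleR r x) = scaleR r (e12 x)"
  "e21 (scaleR r x) = scaleR r (e21 x)" "e22 (scaleR r x) = scaleR r (e22 x)"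
  by (simp_all add: scaleR_m2_def)
instance by (standard; rule m2_eqI; simp add: scaleR_add_right scaleR_add_left)
end

instance m2 :: (real_algebra_1) real_algebra_1
  by (standard; rule m2_eqI; simp add: scaleR_add_right)

instantiation m2 :: (real_normed_vector) real_normed_vector begin
definition norm_m2_def: "norm x = max (norm (e11 x) + norm (e12 x)) (norm (e21 x) + norm (e22 x))"
definition sgn_m2_def: "sgn (x :: 'a m2) = x /\<^sub>R norm x"
definition dist_m2_def: "dist (x :: 'a m2) y = norm (x - y)"
definition uniformity_m2_def:
  "(uniformity :: ('a m2 \<times> 'a m2) filter) = (INF e\<in>{0 <..}. principal {(x, y). dist x y < e})"
definition open_m2_def:
  "open (U :: 'a m2 set) \<longleftrightarrow> (\<forall>x\<in>U. eventually (\<lambda>(x', y). x' = x \<longrightarrow> y \<in> U) uniformity)"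
instance
proof
  fix r :: real and x y :: "'a m2"
  show "(norm x = 0) = (x = 0)"
  proof
    assume "norm x = 0"
    hence "norm (e11 x) = 0" "norm (e12 x) = 0" "norm (e21 x) = 0" "norm (e22 x) = 0"
      unfolding norm_m2_def by (smt (verit) norm_ge_zero)+
    thus "x = 0" by (auto intro!: m2_eqI)
  qed (simp add: norm_m2_def)
  show "norm (x + y) \<le> norm x + norm y"
    unfolding norm_m2_def using norm_triangle_ineq[of "e11 x" "e11 y"] norm_triangle_ineq[of "e12 x" "e12 y"]
      norm_triangle_ineq[of "e21 x" "e21 y"] norm_triangle_ineq[of "e22 x" "e22 y"]
    by simp linarith
  show "norm (scaleR r x) = \<bar>r\<bar> * norm x"
    unfolding norm_m2_def by (simp add: distrib_left[symmetric] max_mult_distrib_left)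
qed (rule sgn_m2_def dist_m2_def open_m2_def uniformity_m2_def)+
end

lemma norm_e11_le: "norm (e11 x) \<le> norm x" and norm_e12_le: "norm (e12 x) \<le> norm x"
  and norm_e21_le: "norm (e21 x) \<le> norm x" and norm_e22_le: "norm (e22 x) \<le> norm x"
  unfolding norm_m2_def by (smt (verit) norm_ge_zero)+

lemma norm_m2_le_sum: "norm x \<le> norm (e11 x) + norm (e12 x) + norm (e21 x) + norm (e22 x)"
  unfolding norm_m2_def by (smt (verit) norm_ge_zero)

instance m2 :: (real_normed_algebra_1) real_normed_algebra_1
proof
  show "norm (1 :: 'a m2) = 1" by (simp add: norm_m2_def)
  fix x y :: "'a m2"
  obtain a b c d where x: "x = M2 a b c d" by (cases x)
  obtain a' b' c' d' where y: "y = M2 a' b' c' d'" by (cases y)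
  have row: "norm (p * a' + q * c') + norm (p * b' + q * d') \<le> (norm p + norm q) * norm y" for p q :: 'a
  proof -
    have "norm (p * a' + q * c') + norm (p * b' + q * d')
        \<le> (norm p * norm a' + norm q * norm c') + (norm p * norm b' + norm q * norm d')"
      by (intro add_mono order_trans[OF norm_triangle_ineq] norm_mult_ineq)
    also have "\<dots> = norm p * (norm a' + norm b') + norm q * (norm c' + norm d')" by (simp add: algebra_simps)
    also have "\<dots> \<le> norm p * norm y + norm q * norm y"
      by (intro add_mono mult_left_mono) (auto simp: y norm_m2_def)
    finally show ?thesis by (simp add: algebra_simps)
  qed
  have "norm (x * y) = max (norm (a * a' + b * c') + norm (a * b' + b * d')) (norm (c * a' + d * c') + norm (c * b' + d * d'))"
    by (simp add: x y norm_m2_def)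
  also have "\<dots> \<le> max ((norm a + norm b) * norm y) ((norm c + norm d) * norm y)"
    by (intro max.mono row)
  also have "\<dots> = norm x * norm y"
  proof -
    have "max (p * n) (q * n) = max p q * n" if "n \<ge> 0" for p q n :: real
      using that by (smt (verit, best) mult_right_mono)
    hence "max ((norm a + norm b) * norm y) ((norm c + norm d) * norm y) = max (norm a + norm b) (norm c + norm d) * norm y"
      by simp
    moreover have "max (norm a + norm b) (norm c + norm d) = norm x" by (simp add: x norm_m2_def)
    ultimately show ?thesis by simp
  qed
  finally show "norm (x * y) \<le> norm x * norm y" .
qed

lemma Cauchy_contr:
  fixes f :: "'a::real_normed_vector \<Rightarrow> 'b::real_normed_vector"
  assumes f: "\<And>x y. norm (f x - f y) \<le> norm (x - y)" and X: "Cauchy X"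
  shows "Cauchy (\<lambda>n. f (X n))"
  unfolding Cauchy_def dist_norm
proof (intro allI impI)
  fix e :: real assume e: "e > 0"
  then obtain M where M: "\<And>m n. m \<ge> M \<Longrightarrow> n \<ge> M \<Longrightarrow> norm (X m - X n) < e"
    using X unfolding Cauchy_def dist_norm by blast
  show "\<exists>M. \<forall>m\<ge>M. \<forall>n\<ge>M. norm (f (X m) - f (X n)) < e"
    using M f le_less_trans by blast
qed

lemma Cauchy_m2_sel:
  assumes "Cauchy X"
  shows "Cauchy (\<lambda>n. e11 (X n))" "Cauchy (\<lambda>n. e12 (X n))" "Cauchy (\<lambda>n. e21 (X n))" "Cauchy (\<lambda>n. e22 (X n))"
  by (rule Cauchy_contr[OF _ assms], metis m2_sel_minus norm_e11_le norm_e12_le norm_e21_le norm_e22_le)+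

instance m2 :: (banach) banach
proof
  fix X :: "nat \<Rightarrow> 'a m2" assume X: "Cauchy X"
  obtain l1 where l1: "(\<lambda>n. e11 (X n)) \<longlonglongrightarrow> l1" using Cauchy_m2_sel(1)[OF X] Cauchy_convergent_iff convergent_def by blast
  obtain l2 where l2: "(\<lambda>n. e12 (X n)) \<longlonglongrightarrow> l2" using Cauchy_m2_sel(2)[OF X] Cauchy_convergent_iff convergent_def by blast
  obtain l3 where l3: "(\<lambda>n. e21 (X n)) \<longlonglongrightarrow> l3" using Cauchy_m2_sel(3)[OF X] Cauchy_convergent_iff convergent_def by blast
  obtain l4 where l4: "(\<lambda>n. e22 (X n)) \<longlonglongrightarrow> l4" using Cauchy_m2_sel(4)[OF X] Cauchy_convergent_iff convergent_def by blast
  define L where "L = M2 l1 l2 l3 l4"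
  have "(\<lambda>n. norm (e11 (X n) - l1) + norm (e12 (X n) - l2) + norm (e21 (X n) - l3) + norm (e22 (X n) - l4)) \<longlonglongrightarrow> 0 + 0 + 0 + 0"
    by (intro tendsto_add tendsto_norm_zero LIM_zero l1 l2 l3 l4)
  hence "(\<lambda>n. norm (e11 (X n) - l1) + norm (e12 (X n) - l2) + norm (e21 (X n) - l3) + norm (e22 (X n) - l4)) \<longlonglongrightarrow> 0" by simp
  hence "(\<lambda>n. X n - L) \<longlonglongrightarrow> 0"
  proof (rule Lim_null_comparison[rotated])
    have "norm (X n - L) \<le> norm (e11 (X n) - l1) + norm (e12 (X n) - l2) + norm (e21 (X n) - l3) + norm (e22 (X n) - l4)" for n
      using norm_m2_le_sum[of "X n - L"] by (simp add: L_def)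
    thus "\<forall>\<^sub>F n in sequentially. norm (X n - L) \<le> norm (e11 (X n) - l1) + norm (e12 (X n) - l2) + norm (e21 (X n) - l3) + norm (e22 (X n) - l4)"
      by (intro always_eventually) blast
  qed
  hence "X \<longlonglongrightarrow> L" by (simp add: LIM_zero_iff)
  thus "convergent X" by (rule convergentI)
qed

instantiation m2 :: (complex_banach_algebra_1) complex_banach_algebra_1 begin
definition scaleC_m2_def: "scaleC c x = M2 (scaleC c (e11 x)) (scaleC c (e12 x)) (scaleC c (e21 x)) (scaleC c (e22 x))"
lemma m2_scaleC_simps[simp]:
  "e11 (scaleC c x) = scaleC c (e11 x)" "e12 (scaleC c x) = scaleC c (e12 x)"
  "e21 (scaleC c x) = scaleC c (e21 x)" "e22 (scaleC c x) = scaleC c (e22 x)"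
  by (simp_all add: scaleC_m2_def)
instance
proof
  fix c d :: complex and x y :: "'a m2" and r :: real
  show "scaleC c (x + y) = scaleC c x + scaleC c y" by (auto intro!: m2_eqI simp: scaleC_add_right)
  show "scaleC (c + d) x = scaleC c x + scaleC d x" by (auto intro!: m2_eqI simp: scaleC_add_left)
  show "scaleC c (scaleC d x) = scaleC (c * d) x" by (auto intro!: m2_eqI simp: scaleC_scaleC)
  show "scaleC 1 x = x" by (auto intro!: m2_eqI simp: scaleC_one)
  show "scaleR r x = scaleC (complex_of_real r) x" by (auto intro!: m2_eqI simp: scaleR_scaleC)
  show "norm (scaleC c x) = cmod c * norm x"
    unfolding norm_m2_def by (simp add: norm_scaleC distrib_left[symmetric] max_mult_distrib_left)
  show "scaleC c x * y = scaleC c (x * y)" by (auto intro!: m2_eqI simp: mult_scaleC_left scaleC_add_right)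
  show "x * scaleC c y = scaleC c (x * y)" by (auto intro!: m2_eqI simp: mult_scaleC_right scaleC_add_right)
qed
end

definition toV :: "'a::zero m2 \<Rightarrow> 'a^2^2" where
  "toV X = mk2 (e11 X) (e12 X) (e21 X) (e22 X)"

definition fromV :: "'a^2^2 \<Rightarrow> 'a m2" where
  "fromV Z = M2 (Z $ 1 $ 1) (Z $ 1 $ 2) (Z $ 2 $ 1) (Z $ 2 $ 2)"

lemma two_ne: "(2::2) \<noteq> 1" by simp

lemma mk2_nth[simp]:
  "mk2 a b c d $ 1 $ 1 = a" "mk2 a b c d $ 1 $ 2 = b" "mk2 a b c d $ 2 $ 1 = c" "mk2 a b c d $ 2 $ 2 = d"
  by (simp_all add: mk2_def)

lemma vec2_eqI:
  fixes X Y :: "'a^2^2"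
  assumes "X $ 1 $ 1 = Y $ 1 $ 1" "X $ 1 $ 2 = Y $ 1 $ 2" "X $ 2 $ 1 = Y $ 2 $ 1" "X $ 2 $ 2 = Y $ 2 $ 2"
  shows "X = Y"
proof -
  have "X $ i $ j = Y $ i $ j" for i j :: 2
    using exhaust_2[of i] exhaust_2[of j] assms by auto
  thus ?thesis by (simp add: vec_eq_iff)
qed

lemma toV_fromV: "toV (fromV Z) = Z"
  by (rule vec2_eqI) (simp_all add: toV_def fromV_def)

lemma fromV_toV: "fromV (toV X) = X"
  by (cases X) (simp add: toV_def fromV_def)

lemma toV_inj: "toV X = toV Y \<Longrightarrow> X = Y"
  by (metis fromV_toV)

lemma toV_M2: "toV (M2 a b c d) = mk2 a b c d" by (simp add: toV_def)

lemma toV_mult: "toV (X * Y) = toV X ** toV (Y :: 'a::ring_1 m2)"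
  by (rule vec2_eqI) (simp_all add: toV_def matrix_matrix_mult_def sum_2)

lemma toV_one: "toV (1 :: 'a::ring_1 m2) = mat 1"
  by (rule vec2_eqI) (simp_all add: toV_def mat_def)

lemma toV_zero: "toV (0 :: 'a::ring_1 m2) = 0"
  by (rule vec2_eqI) (simp_all add: toV_def)

lemma toV_add: "toV (X + Y) = toV X + toV (Y :: 'a::ring_1 m2)"
  by (rule vec2_eqI) (simp_all add: toV_def)

lemma toV_diff: "toV (X - Y) = toV X - toV (Y :: 'a::ring_1 m2)"
  by (rule vec2_eqI) (simp_all add: toV_def)

lemma toV_pow: "toV (X ^ n) = mpow (toV X) n" for X :: "'a::ring_1 m2"
  by (induction n) (simp_all add: toV_one toV_mult)

lemma norm_toV_le: "norm (toV X) \<le> 4 * norm (X :: 'a::real_normed_vector m2)"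
proof -
  have row: "norm (toV X $ i) \<le> 2 * norm X" for i
  proof -
    have "norm (toV X $ i) \<le> (\<Sum>j\<in>UNIV. norm (toV X $ i $ j))"
      unfolding norm_vec_def by (rule L2_set_le_sum) auto
    also have "\<dots> \<le> (\<Sum>j\<in>(UNIV::2 set). norm X)"
    proof (rule sum_mono)
      fix j :: 2
      show "norm (toV X $ i $ j) \<le> norm X"
        using exhaust_2[of i] exhaust_2[of j] norm_e11_le[of X] norm_e12_le[of X] norm_e21_le[of X] norm_e22_le[of X]
        by (auto simp: toV_def)
    qed
    finally show ?thesis by simp
  qed
  have "norm (toV X) \<le> (\<Sum>i\<in>UNIV. norm (toV X $ i))"
    unfolding norm_vec_def by (rule L2_set_le_sum) auto
  also have "\<dots> \<le> (\<Sum>i\<in>(UNIV::2 set). 2 * norm X)" by (rule sum_mono) (rule row)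
  finally show ?thesis by simp
qed

lemma norm_le_toV: "norm X \<le> 4 * norm (toV (X :: 'a::real_normed_vector m2))"
proof -
  have e: "norm (toV X $ i $ j) \<le> norm (toV X)" for i j
    using Finite_Cartesian_Product.norm_nth_le[of "toV X $ i" j] Finite_Cartesian_Product.norm_nth_le[of "toV X" i] by linarith
  show ?thesis using norm_m2_le_sum[of X] e[of 1 1] e[of 1 2] e[of 2 1] e[of 2 2]
    by (simp add: toV_def)
qed

lemma quasinilpotent2_iff: "quasinilpotent2 (toV X) \<longleftrightarrow> quasinilpotent (X :: 'a::real_normed_algebra_1 m2)"
proof -
  have "quasinilpotent2 (toV X) \<longleftrightarrow> (\<forall>\<epsilon>>0. \<exists>C. \<forall>n. norm (toV (X ^ n)) \<le> C * \<epsilon> ^ n)"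
    unfolding quasinilpotent2_def toV_pow by (rule root_bound_iff) simp
  also have "\<dots> \<longleftrightarrow> (\<forall>\<epsilon>>0. \<exists>C. \<forall>n. norm (X ^ n) \<le> C * \<epsilon> ^ n)"
  proof (intro iffI allI impI)
    fix \<epsilon> :: real assume e: "\<epsilon> > 0"
    assume "\<forall>\<epsilon>>0. \<exists>C. \<forall>n. norm (toV (X ^ n)) \<le> C * \<epsilon> ^ n"
    then obtain C where C: "\<And>n. norm (toV (X ^ n)) \<le> C * \<epsilon> ^ n" using e by blast
    have "norm (X ^ n) \<le> (4 * C) * \<epsilon> ^ n" for n using norm_le_toV[of "X ^ n"] C[of n] by simp
    thus "\<exists>C. \<forall>n. norm (X ^ n) \<le> C * \<epsilon> ^ n" by blast
  next
    fix \<epsilon> :: real assume e: "\<epsilon> > 0"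
    assume "\<forall>\<epsilon>>0. \<exists>C. \<forall>n. norm (X ^ n) \<le> C * \<epsilon> ^ n"
    then obtain C where C: "\<And>n. norm (X ^ n) \<le> C * \<epsilon> ^ n" using e by blast
    have "norm (toV (X ^ n)) \<le> (4 * C) * \<epsilon> ^ n" for n using norm_toV_le[of "X ^ n"] C[of n] by simp
    thus "\<exists>C. \<forall>n. norm (toV (X ^ n)) \<le> C * \<epsilon> ^ n" by blast
  qed
  also have "\<dots> \<longleftrightarrow> quasinilpotent X" unfolding quasinilpotent_def by (rule root_bound_iff[symmetric]) simp
  finally show ?thesis .
qed

lemma gdi2_iff: "is_gdrazin_inv2 (toV X) (toV Y) \<longleftrightarrow> is_gdrazin_inv X (Y :: 'a::real_normed_algebra_1 m2)"
  unfolding is_gdrazin_inv2_def is_gdrazin_inv_def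
  by (simp add: toV_mult[symmetric] toV_pow[symmetric] toV_diff[symmetric] quasinilpotent2_iff)
     (metis toV_inj)

lemma qb_sq:
  fixes x :: "'a::real_normed_algebra_1"
  assumes q: "qb (x * x)"
  shows "qb x"
  unfolding qb_def
proof (intro allI impI)
  fix \<epsilon> :: real assume e: "\<epsilon> > 0"
  obtain C where C: "C \<ge> 1" "\<And>k. norm ((x * x) ^ k) \<le> C * (\<epsilon> ^ 2) ^ k"
    using qbD[OF q, of "\<epsilon> ^ 2"] e by auto
  define C' where "C' = C * (1 + norm x / \<epsilon>)"
  have nx: "0 \<le> norm x / \<epsilon>" using e by simp
  have "C * 1 \<le> C * (1 + norm x / \<epsilon>)" using C nx by (intro mult_left_mono) auto
  hence CC: "C \<le> C'" unfolding C'_def by simp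
  have "norm (x ^ n) \<le> C' * \<epsilon> ^ n" for n
  proof -
    define k where "k = n div 2"
    have k: "n = 2 * k \<or> n = Suc (2 * k)" unfolding k_def by presburger
    have xx: "(x * x) ^ k = x ^ (2 * k)" by (simp only: power_mult power2_eq_square)
    have ee: "(\<epsilon> ^ 2) ^ k = \<epsilon> ^ (2 * k)" by (simp only: power_mult)
    have Cpos: "C * \<epsilon> ^ n \<le> C' * \<epsilon> ^ n" using CC e by (intro mult_right_mono) auto
    from k show ?thesis
    proof
      assume n: "n = 2 * k"
      have "norm (x ^ n) \<le> C * \<epsilon> ^ n" using C(2)[of k] unfolding xx ee n .
      thus ?thesis using Cpos by linarith
    next
      assume n: "n = Suc (2 * k)"
      have "norm (x ^ n) = norm (x * (x * x) ^ k)" unfolding xx n by simp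
      also have "\<dots> \<le> norm x * (C * (\<epsilon> ^ 2) ^ k)"
        by (rule order_trans[OF norm_mult_ineq]) (intro mult_left_mono C(2), simp)
      also have "\<dots> = (C * (norm x / \<epsilon>)) * \<epsilon> ^ n"
      proof -
        have "(norm x / \<epsilon>) * \<epsilon> = norm x" using e by simp
        hence "norm x * (C * \<epsilon> ^ (2 * k)) = C * ((norm x / \<epsilon>) * \<epsilon>) * \<epsilon> ^ (2 * k)" by simp
        thus ?thesis unfolding ee n power_Suc by (simp only: ac_simps)
      qed
      also have "\<dots> \<le> C' * \<epsilon> ^ n" unfolding C'_def using C e nx
        by (intro mult_right_mono mult_left_mono) auto
      finally show ?thesis .
    qed
  qed
  thus "\<exists>C. \<forall>n. norm (x ^ n) \<le> C * \<epsilon> ^ n" by blast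
qed

lemma m2_diag_pow: "(M2 x 0 0 y) ^ n = M2 (x ^ n) 0 0 (y ^ (n::nat))" for x y :: "'a::ring_1"
  by (induction n) (auto intro!: m2_eqI simp: one_m2_def)

lemma qb_diag:
  fixes x y :: "'a::real_normed_algebra_1"
  assumes qx: "qb x" and qy: "qb y"
  shows "qb (M2 x 0 0 y)"
  unfolding qb_def
proof (intro allI impI)
  fix \<epsilon> :: real assume e: "\<epsilon> > 0"
  obtain C1 where C1: "\<And>n. norm (x ^ n) \<le> C1 * \<epsilon> ^ n" using qbD[OF qx e] by blast
  obtain C2 where C2: "\<And>n. norm (y ^ n) \<le> C2 * \<epsilon> ^ n" using qbD[OF qy e] by blast
  have "norm (M2 x 0 0 y ^ n) \<le> (C1 + C2) * \<epsilon> ^ n" for n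
  proof -
    have "norm (M2 x 0 0 y ^ n) = max (norm (x ^ n)) (norm (y ^ n))"
      by (simp add: m2_diag_pow norm_m2_def)
    also have "\<dots> \<le> norm (x ^ n) + norm (y ^ n)" by simp
    also have "\<dots> \<le> (C1 + C2) * \<epsilon> ^ n" using C1[of n] C2[of n] by (simp add: distrib_right)
    finally show ?thesis .
  qed
  thus "\<exists>C. \<forall>n. norm (M2 x 0 0 y ^ n) \<le> C * \<epsilon> ^ n" by blast
qed

lemma sq_proj:
  fixes Q b :: "'a::ring_1"
  assumes c: "b * Q = Q * b" and i: "b * Q * b = b"
  shows "(Q * (1 - Q * b)) * (Q * (1 - Q * b)) = Q * Q * (1 - Q * b)"
proof -
  have QbQ: "Q * b * Q = Q * Q * b" using c by (metis mult.assoc)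
  have qQ: "(1 - Q * b) * Q = Q * (1 - Q * b)" using QbQ by (simp add: left_diff_distrib right_diff_distrib mult.assoc)
  have uu: "Q * b * (Q * b) = Q * b" using i c by (metis mult.assoc)
  have qq: "(1 - Q * b) * (1 - Q * b) = 1 - Q * b" using uu by (simp add: algebra_simps)
  have "(Q * (1 - Q * b)) * (Q * (1 - Q * b)) = Q * ((1 - Q * b) * Q) * (1 - Q * b)" by (simp only: mult.assoc)
  also have "\<dots> = Q * Q * ((1 - Q * b) * (1 - Q * b))" by (simp only: qQ mult.assoc)
  finally show ?thesis using qq by simp
qed

theorem theorem3p1:
  fixes A B C D :: "'a::complex_banach_algebra_1" and lam :: complex
  assumes "lam \<noteq> 0"
    and "gdrazin_invertible A" and "gdrazin_invertible D"
    and "gdrazin_invertible (B * C)" and "gdrazin_invertible (C * B)"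
    and "B * D = scaleC lam (spi (B * C) * A * B * spi D)"
    and "C * A = scaleC lam (spi (C * B) * D * C * spi A)"
  shows "let M = mk2 A B C D; P = mk2 A 0 0 D; Q = mk2 0 B C 0;
             Pd = mk2 (gd A) 0 0 (gd D);
             Qd = mk2 0 (B * gd (C * B)) (C * gd (B * C)) 0;
             Ppi = mat 1 - P ** Pd; Qpi = mat 1 - Q ** Qd;
             S1 = (\<lambda>n. mpow Pd (n + 2) ** Q ** mpow M n ** Qpi);
             S2 = (\<lambda>n. mpow M n ** P ** mpow Qd (n + 2));
             S3 = (\<lambda>n k. mpow Pd (k + 1) ** Q ** mpow M (n + k) ** P ** mpow Qd (n + 2));
             S4 = (\<lambda>n. mpow Pd (n + 2) ** Q ** mpow M n ** P ** Qd)
         in summable S1 \<and> summable S2 \<and> (\<forall>n. summable (S3 n))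
            \<and> summable (\<lambda>n. \<Sum>k. S3 n k) \<and> summable S4
            \<and> gdrazin_invertible2 M
            \<and> gd2 M = mk2 (gd A * spi (B * C)) (spi A * B * gd (C * B))
                          (spi D * C * gd (B * C)) (gd D * spi (C * B))
                      + (\<Sum>n. S1 n) + Ppi ** (\<Sum>n. S2 n)
                      - (\<Sum>n. \<Sum>k. S3 n k) - (\<Sum>n. S4 n)"
proof -
  note lam = assms(1)
  have gA: "is_gdrazin_inv A (gd A)" by (rule gd_spec[OF assms(2)])
  have gD: "is_gdrazin_inv D (gd D)" by (rule gd_spec[OF assms(3)])
  have gBC: "is_gdrazin_inv (B * C) (gd (B * C))" by (rule gd_spec[OF assms(4)])
  have gCB: "is_gdrazin_inv (C * B) (gd (C * B))" by (rule gd_spec[OF assms(5)])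
  define y1 where "y1 = gd (C * B)"
  define y2 where "y2 = gd (B * C)"
  have y2: "y2 = B * y1 * y1 * C"
    unfolding y1_def y2_def using gd_unique[OF gBC cline[OF gCB]] .
  note G1 = gdiD[OF gCB[folded y1_def]] and F1 = gdi_facts[OF gCB[folded y1_def]]
  note G2 = gdiD[OF gBC[folded y2_def]] and F2 = gdi_facts[OF gBC[folded y2_def]]
  have A1: "y1 * y1 * (C * B) = y1" using F1(4) G1(1) by (metis mult.assoc)
  define Pm where "Pm = M2 A 0 0 D"
  define Qm where "Qm = M2 0 B C 0"
  define am where "am = M2 (gd A) 0 0 (gd D)"
  define bm where "bm = M2 0 (B * y1) (C * y2) 0"
  have gP: "is_gdrazin_inv Pm am"
  proof -
    note GA = gdiD[OF gA] and GD = gdiD[OF gD]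
    have "am * Pm = Pm * am" unfolding am_def Pm_def by (rule m2_eqI) (simp_all add: GA(1) GD(1))
    moreover have "am * Pm * am = am" unfolding am_def Pm_def
      by (rule m2_eqI) (simp_all add: GA(2) GD(2))
    moreover have "qb (Pm - Pm * Pm * am)"
    proof -
      have "Pm - Pm * Pm * am = M2 (A - A * A * gd A) 0 0 (D - D * D * gd D)"
        unfolding am_def Pm_def by (rule m2_eqI) simp_all
      thus ?thesis using qb_diag[OF GA(3) GD(3)] by simp
    qed
    ultimately show ?thesis unfolding is_gdrazin_inv_def quasinilpotent_qb power2_eq_square by simp
  qed
  have BC1: "B * y1 * C = B * (C * y2)"
  proof -
    have "B * (C * y2) = B * (C * B * y1 * y1) * C" unfolding y2 by (simp add: mult.assoc)
    thus ?thesis using F1(3) by simp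
  qed
  have BC2: "C * y2 * B = C * (B * y1)"
  proof -
    have "C * y2 * B = C * B * (y1 * y1 * (C * B))" unfolding y2 by (simp add: mult.assoc)
    thus ?thesis using A1 by (simp add: mult.assoc)
  qed
  have Qb: "Qm * bm = M2 (B * (C * y2)) 0 0 (C * (B * y1))" unfolding Qm_def bm_def
    by (rule m2_eqI) simp_all
  have gQ: "is_gdrazin_inv Qm bm"
  proof -
    have c: "bm * Qm = Qm * bm" unfolding Qb unfolding Qm_def bm_def
      by (rule m2_eqI) (simp_all add: BC1 BC2)
    have i1: "B * (y1 * (C * (B * y1))) = B * y1"
      using G1(2) by (simp add: mult.assoc)
    have i2: "C * (y2 * (B * (C * y2))) = C * y2"
      using G2(2) by (simp add: mult.assoc)
    have i: "bm * Qm * bm = bm" unfolding Qm_def bm_def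
      by (rule m2_eqI) (simp_all add: mult.assoc i1 i2)
    have "qb (Qm * (1 - Qm * bm))"
    proof (rule qb_sq)
      have "(Qm * (1 - Qm * bm)) * (Qm * (1 - Qm * bm)) = Qm * Qm * (1 - Qm * bm)"
        by (rule sq_proj[OF c i])
      also have "\<dots> = M2 (B * C - B * C * (B * C) * y2) 0 0 (C * B - C * B * (C * B) * y1)"
        unfolding Qb unfolding Qm_def by (rule m2_eqI) (simp_all add: algebra_simps)
      finally show "qb ((Qm * (1 - Qm * bm)) * (Qm * (1 - Qm * bm)))"
        using qb_diag[OF G2(3) G1(3)] by simp
    qed
    moreover have "Qm * (1 - Qm * bm) = Qm - Qm * Qm * bm" by (simp add: algebra_simps)
    ultimately show ?thesis unfolding is_gdrazin_inv_def quasinilpotent_qb power2_eq_square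
      using c i by simp
  qed
  have h: "Qm * Pm = scaleC lam ((1 - Qm * bm) * Pm * Qm * (1 - Pm * am))"
  proof -
    have s1: "spi (B * C) = 1 - B * (C * y2)" unfolding spi_def y2_def by (simp add: mult.assoc)
    have s2: "spi (C * B) = 1 - C * (B * y1)" unfolding spi_def y1_def by (simp add: mult.assoc)
    have e12: "e12 ((1 - Qm * bm) * Pm * Qm * (1 - Pm * am)) = spi (B * C) * A * B * spi D"
      unfolding Qb s1 unfolding Pm_def Qm_def am_def spi_def by simp
    have e21: "e21 ((1 - Qm * bm) * Pm * Qm * (1 - Pm * am)) = spi (C * B) * D * C * spi A"
      unfolding Qb s2 unfolding Pm_def Qm_def am_def spi_def by simp
    show ?thesis
    proof (rule m2_eqI)
      show "e12 (Qm * Pm) = e12 (scaleC lam ((1 - Qm * bm) * Pm * Qm * (1 - Pm * am)))"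
        using e12 assms(6) unfolding Qm_def Pm_def by simp
      show "e21 (Qm * Pm) = e21 (scaleC lam ((1 - Qm * bm) * Pm * Qm * (1 - Pm * am)))"
        using e21 assms(7) unfolding Qm_def Pm_def by simp
      show "e11 (Qm * Pm) = e11 (scaleC lam ((1 - Qm * bm) * Pm * Qm * (1 - Pm * am)))"
        unfolding Qb unfolding Qm_def Pm_def am_def by simp
      show "e22 (Qm * Pm) = e22 (scaleC lam ((1 - Qm * bm) * Pm * Qm * (1 - Pm * am)))"
        unfolding Qb unfolding Qm_def Pm_def am_def by simp
    qed
  qed
  note R = abstract_main[OF lam gP gQ h]
  have za: "am ^ k * Qm = 0" if k0: "k > 0" for k
  proof -
    obtain j where k: "k = Suc j" using k0 by (cases k) auto
    have "am ^ k * Qm = am ^ j * (am * Qm)" unfolding k by (simp only: power_Suc2 mult.assoc)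
    thus ?thesis using R(1) by simp
  qed
  have zb: "X * Pm * bm ^ k = 0" if k0: "k > 0" for k X
  proof -
    obtain j where k: "k = Suc j" using k0 by (cases k) auto
    have "X * Pm * bm ^ k = X * (Pm * bm) * bm ^ j" unfolding k by (simp add: mult.assoc)
    thus ?thesis using R(2) by simp
  qed
  have Mv: "mk2 A B C D = toV (Pm + Qm)" by (simp add: Pm_def Qm_def toV_def)
  have Pv: "mk2 A 0 0 D = toV Pm" by (simp add: Pm_def toV_def)
  have Qv: "mk2 0 B C 0 = toV Qm" by (simp add: Qm_def toV_def)
  have Pdv: "mk2 (gd A) 0 0 (gd D) = toV am" by (simp add: am_def toV_def)
  have Qdv: "mk2 0 (B * gd (C * B)) (C * gd (B * C)) 0 = toV bm" by (simp add: bm_def toV_def y1_def y2_def)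
  have first: "mk2 (gd A * spi (B * C)) (spi A * B * gd (C * B)) (spi D * C * gd (B * C)) (gd D * spi (C * B))
      = toV (am * (1 - Qm * bm) + (1 - Pm * am) * bm)"
    unfolding Qb by (rule vec2_eqI) (simp_all add: toV_def am_def bm_def Pm_def spi_def y1_def y2_def algebra_simps)
  have gdM: "is_gdrazin_inv (Pm + Qm) (am + bm)" by (rule R(4))
  have inv2: "gdrazin_invertible2 (toV (Pm + Qm))"
    unfolding gdrazin_invertible2_def using gdM gdi2_iff by blast
  have gd2M: "gd2 (toV (Pm + Qm)) = toV (am + bm)"
    unfolding gd2_def
  proof (rule the_equality)
    show "is_gdrazin_inv2 (toV (Pm + Qm)) (toV (am + bm))" using gdM gdi2_iff by blast
    fix Z assume "is_gdrazin_inv2 (toV (Pm + Qm)) Z"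
    hence "is_gdrazin_inv2 (toV (Pm + Qm)) (toV (fromV Z))" by (simp add: toV_fromV)
    hence "is_gdrazin_inv (Pm + Qm) (fromV Z)" using gdi2_iff by blast
    hence "fromV Z = am + bm" using gd_unique[OF _ gdM] by blast
    thus "Z = toV (am + bm)" by (metis toV_fromV)
  qed
  have za1: "am ^ (k + 1) * Qm = 0" "am ^ (k + 2) * Qm = 0" for k by (simp_all only: za)
  have zb1: "X * Pm * bm ^ (k + 2) = 0" for k X by (simp only: zb)
  show ?thesis
    unfolding Let_def Mv Pv Qv Pdv Qdv
    unfolding toV_one[symmetric] toV_mult[symmetric] toV_pow[symmetric] toV_diff[symmetric]
    unfolding za1 zb1 mult_zero_left toV_zero
    by (simp add: inv2 gd2M first R(3))
qed

end
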